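(* Let $q>1$, let $X$ be a real zero mean stationary random process with power spectrum $\mathscr{S}_X$, let $a$ be a positive real function and $\gamma$ a strictly increasing differentiable function. Let $\psi\in H^2(\mathbb{R})$ be such that $\hat\psi$ is bounded and $|\hat\psi(u)|=\mathcal{O}(u^{-\eta})$ as $u\to\infty$ for some $\eta>2$, and let $\varphi_1,\varphi_2$ be the bounded functions on $\mathbb{R}^+$ given by $\varphi_1(u)=u|\hat\psi(u)|^2$ and $\varphi_2(u)=u^2|\hat\psi(u)|$. Assume $$J_X=\int_0^\infty \xi^{-1}\mathscr{S}_X(\xi)\,d\xi<\infty .$$ Let $\widetilde{\mathcal{W}}_Y$ be a zero mean random field on $\mathbb{R}\times\mathbb{R}$ with covariance $$\mathbb{E}\{\widetilde{\mathcal{W}}_Y(s,\tau)\overline{\widetilde{\mathcal{W}}_Y(s',\tau')}\}=a(\tau)a(\tau')q^{\frac{s+s'}{2}}\sqrt{\gamma'(\tau)\gamma'(\tau')}\int_0^\infty\mathscr{S}_X(\xi)\overline{\hat\psi}(q^s\gamma'(\tau)\xi)\hat\psi(q^{s'}\gamma'(\tau')\xi)e^{2i\pi\xi(\gamma(\tau)-\gamma(\tau'))}d\xi .$$ Let $\tau_1,\dots,\tau_{N_\tau}$ be time samples and $s_1,\dots,s_{M_s}$ scale samples, and set $\theta_{n,1}=a(\tau_n)^2$, $\theta_{n,2}=\log_q(\gamma'(\tau_n))$, $\boldsymbol\theta_j=(\theta_{n,j})_{n}$. For each $k$, let $\tilde\theta^{(k)}_{n,1}$, $\tilde\theta^{(k)}_{n,2}$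 ($1\le n\le N_\tau$) be estimates of these parameters (treated as deterministic), and assume there is $c_{\theta_1}>0$ with $\tilde\theta^{(k)}_{n,1}>c_{\theta_1}$ for all $n,k$. Define the spectrum estimate $$\tilde{\mathscr{S}}^{(k)}_X(q^{-s_m}\omega_0)=\frac{1}{N_\tau\|\psi\|_2^2}\sum_{n=1}^{N_\tau}\frac{1}{\tilde\theta^{(k)}_{n,1}}\Big|\widetilde{\mathcal{W}}_Y\big(s_m-\tilde\theta^{(k)}_{n,2},\tau_n\big)\Big|^2,$$ and the bias $b^{(k)}_{\mathscr{S}_X}(m)=\mathbb{E}\{\tilde{\mathscr{S}}^{(k)}_X(q^{-s_m}\omega_0)\}-\mathscr{S}_{X,\psi}(q^{-s_m}\omega_0)$ for $m=1,\dots,M_s$, where $$\mathscr{S}_{X,\psi}(q^{-s_m}\omega_0)=\frac{1}{\|\psi\|_2^2}\int_0^\infty\mathscr{S}_X(\xi)\,q^{s_m}|\hat\psi(q^{s_m}\xi)|^2\,d\xi .$$ Then $$\|b^{(k)}_{\mathscr{S}_X}\|_\infty\le\frac{J_X}{\|\psi\|_2^2}\Big(K'_1\|\boldsymbol\theta_1-\tilde{\boldsymbol\theta}^{(k)}_1\|_\infty+K'_2\|\tilde{\boldsymbol\theta}^{(k)}_2-\boldsymbol\theta_2\|_\infty\Big),$$ where $K'_1=\|\varphi_1\|_\infty/c_{\theta_1}<\infty$ and $K'_2=\ln(q)\big(\|\varphi_1\|_\infty+2\|\hat\psi'\|_\infty\|\varphi_2\|_\infty\big)<\infty$.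
   Context: $H^2(\mathbb{R})=\{\psi\in L^2(\mathbb{R}):\operatorname{supp}\hat\psi\subset\mathbb{R}^+\}$, $\hat\psi$ the Fourier transform of $\psi$. The power spectrum $\mathscr{S}_X\ge0$ satisfies $\mathbb{E}\{X_tX_s\}=\int\mathscr{S}_X(\nu)e^{2i\pi\nu(t-s)}d\nu$. $\omega_0$ is the central frequency of $|\hat\psi|^2$. The field $\widetilde{\mathcal{W}}_Y$ models the approximate wavelet transform $a(\tau)\mathcal{W}_X(s+\log_q\gamma'(\tau),\gamma(\tau))$ of $Y_t=a(t)\sqrt{\gamma'(t)}X_{\gamma(t)}$, with $\mathcal{W}_X(s,\tau)=\int X_t\overline{q^{-s/2}\psi(q^{-s}(t-\tau))}dt$. Sup norms $\|\cdot\|_\infty$ of vectors are over $n=1,\dots,N_\tau$ (resp. $m=1,\dots,M_s$ for the bias), and of functions are suprema over their domain.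
   Formalization: The Fourier transform $\hat\psi$ is also assumed differentiable on (0, infinity) with bounded derivative $\hat\psi'$. The paper assumes this as well. *)

theory Defs
  imports "HOL-Probability.Probability" "HOL-Library.Landau_Symbols"
begin

text \<open>The wavelet is represented through its Fourier transform Psi (psi hat).
  Squared L2 norm of psi, via Plancherel: integral of the squared modulus of Psi.\<close>
definition psi_sq_norm :: "(real \<Rightarrow> complex) \<Rightarrow> real" where
  "psi_sq_norm Psi = (\<integral>u. (cmod (Psi u))\<^sup>2 \<partial>lborel)"

definition phi1 :: "(real \<Rightarrow> complex) \<Rightarrow> real \<Rightarrow> real" where
  "phi1 Psi u = u * (cmod (Psi u))\<^sup>2"

definition phi2 :: "(real \<Rightarrow> complex) \<Rightarrow> real \<Rightarrow> real" where
  "phi2 Psi u = u\<^sup>2 * cmod (Psi u)"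

definition sup_pos :: "(real \<Rightarrow> real) \<Rightarrow> real" where
  "sup_pos f = (SUP u\<in>{0<..}. \<bar>f u\<bar>)"

text \<open>The wavelet-smoothed spectrum S_{X,psi}(q^{-s} omega_0).\<close>
definition S_X_psi :: "(real \<Rightarrow> real) \<Rightarrow> (real \<Rightarrow> complex) \<Rightarrow> real \<Rightarrow> real \<Rightarrow> real" where
  "S_X_psi S Psi q s = (1 / psi_sq_norm Psi) *
     set_lebesgue_integral lborel {0<..} (\<lambda>\<xi>. S \<xi> * q powr s * (cmod (Psi (q powr s * \<xi>)))\<^sup>2)"

definition cov_W :: "(real \<Rightarrow> real) \<Rightarrow> (real \<Rightarrow> real) \<Rightarrow> (real \<Rightarrow> real) \<Rightarrow> (real \<Rightarrow> real)
   \<Rightarrow> (real \<Rightarrow> complex) \<Rightarrow> real \<Rightarrow> real \<Rightarrow> real \<Rightarrow> real \<Rightarrow> real \<Rightarrow> complex" where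
  "cov_W a \<gamma> \<gamma>' S Psi q s \<tau> s' \<tau>' =
     complex_of_real (a \<tau> * a \<tau>' * q powr ((s + s') / 2) * sqrt (\<gamma>' \<tau> * \<gamma>' \<tau>')) *
     set_lebesgue_integral lborel {0<..} (\<lambda>\<xi>. complex_of_real (S \<xi>)
        * cnj (Psi (q powr s * \<gamma>' \<tau> * \<xi>)) * Psi (q powr s' * \<gamma>' \<tau>' * \<xi>)
        * exp (2 * \<i> * complex_of_real (pi * \<xi> * (\<gamma> \<tau> - \<gamma> \<tau>'))))"

end

theory Submission
  imports Defs
begin


lemma bdd_phis:
  fixes Psi :: "real \<Rightarrow> complex" and \<eta> :: real
  assumes Psi_bdd: "bounded (range Psi)" and \<eta>: "\<eta> > 2"
    and Psi_decay: "(\<lambda>u. cmod (Psi u)) \<in> O[at_top](\<lambda>u. u powr (- \<eta>))"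
  shows "bdd_above ((\<lambda>u. \<bar>phi1 Psi u\<bar>) ` {0<..}) \<and> bdd_above ((\<lambda>u. \<bar>phi2 Psi u\<bar>) ` {0<..})"
proof -
  obtain Bd where Bd: "\<And>u. cmod (Psi u) \<le> Bd" using Psi_bdd unfolding bounded_iff by auto
  obtain c where c: "c > 0" and ev: "eventually (\<lambda>u. norm (cmod (Psi u)) \<le> c * norm (u powr (- \<eta>))) at_top"
    using landau_o.bigE[OF Psi_decay] by blast
  obtain U0 where U0: "\<And>u. u \<ge> U0 \<Longrightarrow> norm (cmod (Psi u)) \<le> c * norm (u powr (- \<eta>))"
    using ev unfolding eventually_at_top_linorder by blast
  define U where "U = max U0 1"
  have big: "cmod (Psi u) \<le> c / u\<^sup>2" if "u \<ge> U" for u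
  proof -
    have u1: "u \<ge> 1" "u \<ge> U0" using that by (auto simp: U_def)
    have "cmod (Psi u) \<le> c * u powr (- \<eta>)" using U0[OF u1(2)] u1 by simp
    also have "u powr (- \<eta>) \<le> u powr (-2)" using u1 \<eta> by (intro powr_mono) auto
    also have "u powr (-2) = 1 / u\<^sup>2" using u1 by (simp add: powr_minus_divide powr_realpow divide_inverse)
    finally show ?thesis using c by (simp add: divide_inverse mult_left_mono)
  qed
  have Bd0: "Bd \<ge> 0" using Bd[of 0] norm_ge_zero order_trans by blast
  have b1: "\<bar>phi1 Psi u\<bar> \<le> max (U * Bd\<^sup>2) (c * Bd)" if "u > 0" for u
  proof (cases "u \<ge> U")
    case True
    have u0: "u > 0" using that .
    have "\<bar>phi1 Psi u\<bar> = u * cmod (Psi u) * cmod (Psi u)" using u0 by (simp add: phi1_def power2_eq_square)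
    also have "\<dots> \<le> u * (c / u\<^sup>2) * Bd" using u0 big[OF True] Bd[of u] c
      by (intro mult_mono mult_left_mono) auto
    also have "\<dots> = c * Bd / u" using u0 by (simp add: power2_eq_square field_simps)
    also have "\<dots> \<le> c * Bd" using True c Bd0 by (simp add: U_def divide_le_eq mult_le_cancel_left1) (smt (verit) mult_nonneg_nonneg mult_right_mono)
    finally show ?thesis by simp
  next
    case False
    have "\<bar>phi1 Psi u\<bar> = u * (cmod (Psi u))\<^sup>2" using that by (simp add: phi1_def)
    also have "\<dots> \<le> U * Bd\<^sup>2" using False that Bd[of u] by (intro mult_mono power_mono) auto
    finally show ?thesis by simp
  qed
  have b2: "\<bar>phi2 Psi u\<bar> \<le> max (U\<^sup>2 * Bd) c" if "u > 0" for u
  proof (cases "u \<ge> U")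
    case True
    have "\<bar>phi2 Psi u\<bar> = u\<^sup>2 * cmod (Psi u)" by (simp add: phi2_def)
    also have "\<dots> \<le> u\<^sup>2 * (c / u\<^sup>2)" using big[OF True] by (intro mult_left_mono) auto
    also have "\<dots> = c" using that by simp
    finally show ?thesis by simp
  next
    case False
    have "\<bar>phi2 Psi u\<bar> = u\<^sup>2 * cmod (Psi u)" by (simp add: phi2_def)
    also have "\<dots> \<le> U\<^sup>2 * Bd" using False that Bd[of u] by (intro mult_mono power_mono) auto
    finally show ?thesis by simp
  qed
  show ?thesis using b1 b2 by (auto intro!: bdd_aboveI2)
qed


lemma lip_from_deriv:
  fixes f f' :: "real \<Rightarrow> real"
  assumes d: "\<And>x. (f has_real_derivative f' x) (at x)" and b: "\<And>x. \<bar>f' x\<bar> \<le> B"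
  shows "\<bar>f x - f y\<bar> \<le> B * \<bar>x - y\<bar>"
proof -
  have *: "\<bar>f b - f a\<bar> \<le> B * \<bar>b - a\<bar>" if "a < b" for a b
  proof -
    have "\<exists>z. a < z \<and> z < b \<and> f b - f a = (b - a) * f' z" by (rule MVT2[OF that d])
    then obtain z where "f b - f a = (b - a) * f' z" by blast
    then have "\<bar>f b - f a\<bar> = \<bar>b - a\<bar> * \<bar>f' z\<bar>" by (simp add: abs_mult)
    also have "\<dots> \<le> \<bar>b - a\<bar> * B" using b by (intro mult_left_mono) auto
    finally show ?thesis by (simp add: mult.commute)
  qed
  show ?thesis
    using *[of x y] *[of y x] by (cases x y rule: linorder_cases) (auto simp: abs_minus_commute)
qed

lemma h_lip:
  fixes Psi Psi' :: "real \<Rightarrow> complex"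
  assumes q: "q > 1" and \<xi>: "\<xi> > 0"
    and Psi_deriv: "\<And>u. u > 0 \<Longrightarrow> (Psi has_vector_derivative Psi' u) (at u)"
    and A: "\<And>v. v > 0 \<Longrightarrow> \<bar>phi1 Psi v\<bar> \<le> A"
    and B: "\<And>v. v > 0 \<Longrightarrow> cmod (Psi' v) \<le> B"
    and C: "\<And>v. v > 0 \<Longrightarrow> \<bar>phi2 Psi v\<bar> \<le> C"
  shows "\<bar>q powr x * (cmod (Psi (q powr x * \<xi>)))\<^sup>2 - q powr y * (cmod (Psi (q powr y * \<xi>)))\<^sup>2\<bar>
     \<le> (ln q / \<xi>) * (A + 2 * B * C) * \<bar>x - y\<bar>"
proof (rule lip_from_deriv)
  fix u :: real
  define v where "v = q powr u * \<xi>"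
  have v0: "v > 0" using q \<xi> by (simp add: v_def)
  have dN: "((\<lambda>w. (cmod (Psi w))\<^sup>2) has_real_derivative 2 * inner (Psi v) (Psi' v)) (at v)"
  proof -
    have hd: "(Psi has_derivative (\<lambda>h. h *\<^sub>R Psi' v)) (at v)"
      using Psi_deriv[OF v0] by (simp add: has_vector_derivative_def)
    have "((\<lambda>w. inner (Psi w) (Psi w)) has_derivative
          (\<lambda>h. inner (Psi v) (h *\<^sub>R Psi' v) + inner (h *\<^sub>R Psi' v) (Psi v))) (at v)"
      by (rule has_derivative_inner[OF hd hd])
    moreover have "(\<lambda>h. inner (Psi v) (h *\<^sub>R Psi' v) + inner (h *\<^sub>R Psi' v) (Psi v))
        = (\<lambda>h. h * (2 * inner (Psi v) (Psi' v)))"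
      by (auto simp: inner_commute algebra_simps)
    ultimately have "((\<lambda>w. inner (Psi w) (Psi w)) has_derivative (\<lambda>h. (2 * inner (Psi v) (Psi' v)) * h)) (at v)"
      by (simp add: mult.commute)
    then show ?thesis
      by (simp add: has_field_derivative_def power2_norm_eq_inner)
  qed
  have dv: "((\<lambda>w. q powr w * \<xi>) has_real_derivative q powr u * ln q * \<xi>) (at u)"
    using q by (auto intro!: derivative_eq_intros)
  have dNc: "((\<lambda>w. (cmod (Psi (q powr w * \<xi>)))\<^sup>2) has_real_derivative
      2 * inner (Psi v) (Psi' v) * (q powr u * ln q * \<xi>)) (at u)"
    using DERIV_chain2[OF dN[unfolded v_def] dv] by (simp add: v_def)
  have dp: "((\<lambda>w. q powr w) has_real_derivative q powr u * ln q) (at u)"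
    using q by (auto intro!: derivative_eq_intros)
  show "((\<lambda>w. q powr w * (cmod (Psi (q powr w * \<xi>)))\<^sup>2) has_real_derivative
     q powr u * ln q * (cmod (Psi v))\<^sup>2 + q powr u * (2 * inner (Psi v) (Psi' v) * (q powr u * ln q * \<xi>))) (at u)"
    using DERIV_mult[OF dp dNc] by (simp add: v_def mult.commute)
  have lq: "ln q > 0" using q by simp
  have e1: "q powr u * ln q * (cmod (Psi v))\<^sup>2 = (ln q / \<xi>) * phi1 Psi v"
    using \<xi> by (simp add: phi1_def v_def field_simps)
  have e2: "q powr u * (2 * inner (Psi v) (Psi' v) * (q powr u * ln q * \<xi>))
      = (ln q / \<xi>) * (2 * v\<^sup>2 * inner (Psi v) (Psi' v))"
    using \<xi> by (simp add: v_def field_simps power2_eq_square)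
  have i1: "\<bar>inner (Psi v) (Psi' v)\<bar> \<le> cmod (Psi v) * cmod (Psi' v)"
    by (rule Cauchy_Schwarz_ineq2)
  have "\<bar>2 * v\<^sup>2 * inner (Psi v) (Psi' v)\<bar> \<le> 2 * (v\<^sup>2 * cmod (Psi v)) * cmod (Psi' v)"
    using i1 by (simp add: abs_mult mult_left_mono mult.assoc)
  also have "\<dots> \<le> 2 * C * B"
    using C[OF v0] abs_ge_zero[of "phi2 Psi v"] order_trans[OF abs_ge_zero C[OF v0]] B[OF v0] by (intro mult_mono) (auto simp: phi2_def)
  also have "2 * C * B = 2 * B * C" by simp
  finally have i2: "\<bar>2 * v\<^sup>2 * inner (Psi v) (Psi' v)\<bar> \<le> 2 * B * C" .
  define L where "L = ln q / \<xi>"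
  have L0: "L > 0" using lq \<xi> by (simp add: L_def)
  have "\<bar>L * phi1 Psi v + L * (2 * v\<^sup>2 * inner (Psi v) (Psi' v))\<bar>
      \<le> \<bar>L * phi1 Psi v\<bar> + \<bar>L * (2 * v\<^sup>2 * inner (Psi v) (Psi' v))\<bar>"
    by (rule abs_triangle_ineq)
  also have "\<dots> = L * \<bar>phi1 Psi v\<bar> + L * \<bar>2 * v\<^sup>2 * inner (Psi v) (Psi' v)\<bar>"
    using L0 by (simp add: abs_mult)
  also have "\<dots> \<le> L * A + L * (2 * B * C)"
    using L0 A[OF v0] i2 by (intro add_mono mult_left_mono) auto
  also have "\<dots> = L * (A + 2 * B * C)" by (simp add: distrib_left)
  finally show "\<bar>q powr u * ln q * (cmod (Psi v))\<^sup>2 + q powr u * (2 * inner (Psi v) (Psi' v) * (q powr u * ln q * \<xi>))\<bar>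
      \<le> (ln q / \<xi>) * (A + 2 * B * C)"
    unfolding e1 e2 L_def .
qed


lemma F_facts:
  fixes Psi Psi' :: "real \<Rightarrow> complex" and S :: "real \<Rightarrow> real"
  assumes q: "q > 1"
    and S_nonneg: "\<And>\<nu>. S \<nu> \<ge> 0"
    and S_meas: "S \<in> borel_measurable borel"
    and Psi_meas: "Psi \<in> borel_measurable borel"
    and J_fin: "set_integrable lborel {0<..} (\<lambda>\<xi>. S \<xi> / \<xi>)"
    and Psi_deriv: "\<And>u. u > 0 \<Longrightarrow> (Psi has_vector_derivative Psi' u) (at u)"
    and A: "\<And>v. v > 0 \<Longrightarrow> \<bar>phi1 Psi v\<bar> \<le> A"
    and B: "\<And>v. v > 0 \<Longrightarrow> cmod (Psi' v) \<le> B"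
    and C: "\<And>v. v > 0 \<Longrightarrow> \<bar>phi2 Psi v\<bar> \<le> C"
  defines "F \<equiv> \<lambda>v. set_lebesgue_integral lborel {0<..} (\<lambda>\<xi>. S \<xi> * q powr v * (cmod (Psi (q powr v * \<xi>)))\<^sup>2)"
  defines "J \<equiv> set_lebesgue_integral lborel {0<..} (\<lambda>\<xi>. S \<xi> / \<xi>)"
  shows "\<bar>F v\<bar> \<le> A * J" and "\<bar>F x - F y\<bar> \<le> ln q * (A + 2 * B * C) * \<bar>x - y\<bar> * J"
proof -
  have Jint: "integrable lborel (\<lambda>\<xi>. indicator {0<..} \<xi> * (S \<xi> / \<xi>))"
    using J_fin by (simp add: set_integrable_def)
  have Jdef: "J = (\<integral>\<xi>. indicator {0<..} \<xi> * (S \<xi> / \<xi>) \<partial>lborel)"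
    by (simp add: J_def set_lebesgue_integral_def)
  define f where "f = (\<lambda>v \<xi>. indicator {0<..} \<xi> * (S \<xi> * q powr v * (cmod (Psi (q powr v * \<xi>)))\<^sup>2))"
  have Fdef: "F v = integral\<^sup>L lborel (f v)" for v
    by (simp add: F_def f_def set_lebesgue_integral_def)
  have pt: "\<bar>f v \<xi>\<bar> \<le> A * (indicator {0<..} \<xi> * (S \<xi> / \<xi>))" for v \<xi>
  proof (cases "\<xi> > 0")
    case True
    have "f v \<xi> = (S \<xi> / \<xi>) * phi1 Psi (q powr v * \<xi>)"
      using True by (simp add: f_def phi1_def)
    then have "\<bar>f v \<xi>\<bar> = (S \<xi> / \<xi>) * \<bar>phi1 Psi (q powr v * \<xi>)\<bar>"
      using True S_nonneg[of \<xi>] by (simp add: abs_mult)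
    also have "\<dots> \<le> (S \<xi> / \<xi>) * A"
      using True S_nonneg[of \<xi>] A[of "q powr v * \<xi>"] q by (intro mult_left_mono) auto
    finally show ?thesis using True by (simp add: mult.commute)
  next
    case False
    then show ?thesis by (simp add: f_def)
  qed
  have fmeas: "f v \<in> borel_measurable lborel" for v
    unfolding f_def using S_meas Psi_meas by measurable
  have fint: "integrable lborel (f v)" for v
  proof (rule Bochner_Integration.integrable_bound[OF integrable_mult_right[OF Jint, of A] fmeas])
    show "AE x in lborel. norm (f v x) \<le> norm (A * (indicator {0<..} x * (S x / x)))"
      by (intro AE_I2) (metis pt abs_ge_self order_trans real_norm_def)
  qed
  show "\<bar>F v\<bar> \<le> A * J"
  proof -
    have "\<bar>F v\<bar> \<le> integral\<^sup>L lborel (\<lambda>\<xi>. A * (indicator {0<..} \<xi> * (S \<xi> / \<xi>)))"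
      unfolding Fdef by (rule integral_abs_bound_integral[OF fint integrable_mult_right[OF Jint, of A]]) (rule pt)
    also have "\<dots> = A * J" unfolding Jdef by (rule integral_mult_right_zero)
    finally show ?thesis .
  qed
  define K where "K = ln q * (A + 2 * B * C) * \<bar>x - y\<bar>"
  have pt2: "\<bar>f x \<xi> - f y \<xi>\<bar> \<le> K * (indicator {0<..} \<xi> * (S \<xi> / \<xi>))" for \<xi>
  proof (cases "\<xi> > 0")
    case True
    have "\<bar>f x \<xi> - f y \<xi>\<bar> = S \<xi> * \<bar>q powr x * (cmod (Psi (q powr x * \<xi>)))\<^sup>2 - q powr y * (cmod (Psi (q powr y * \<xi>)))\<^sup>2\<bar>"
      using True S_nonneg[of \<xi>] by (simp add: f_def mult.assoc flip: right_diff_distrib) (simp add: abs_mult)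
    also have "\<dots> \<le> S \<xi> * ((ln q / \<xi>) * (A + 2 * B * C) * \<bar>x - y\<bar>)"
      using h_lip[OF q True Psi_deriv A B C] S_nonneg[of \<xi>] by (intro mult_left_mono) auto
    also have "\<dots> = K * (indicator {0<..} \<xi> * (S \<xi> / \<xi>))"
      using True by (simp add: K_def)
    finally show ?thesis .
  next
    case False
    then show ?thesis by (simp add: f_def)
  qed
  have "F x - F y = integral\<^sup>L lborel (\<lambda>\<xi>. f x \<xi> - f y \<xi>)"
    unfolding Fdef by (rule Bochner_Integration.integral_diff[symmetric, OF fint fint])
  also have "\<bar>\<dots>\<bar> \<le> integral\<^sup>L lborel (\<lambda>\<xi>. K * (indicator {0<..} \<xi> * (S \<xi> / \<xi>)))"
    by (rule integral_abs_bound_integral[OF Bochner_Integration.integrable_diff[OF fint fint] integrable_mult_right[OF Jint, of K]]) (rule pt2)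
  also have "\<dots> = K * J" unfolding Jdef by (rule integral_mult_right_zero)
  finally show "\<bar>F x - F y\<bar> \<le> ln q * (A + 2 * B * C) * \<bar>x - y\<bar> * J"
    by (simp add: K_def)
qed


lemma EW:
  fixes W :: "real \<Rightarrow> real \<Rightarrow> 'a \<Rightarrow> complex" and Psi :: "real \<Rightarrow> complex"
  assumes q: "q > 1" and gp: "\<gamma>' t > 0"
    and W_cov_int: "\<And>s1 t1 s2 t2. integrable M (\<lambda>\<omega>. W s1 t1 \<omega> * cnj (W s2 t2 \<omega>))"
    and W_cov: "\<And>s1 t1 s2 t2. (\<integral>\<omega>. W s1 t1 \<omega> * cnj (W s2 t2 \<omega>) \<partial>M)
                   = cov_W a \<gamma> \<gamma>' S Psi q s1 t1 s2 t2"
  shows "(\<integral>\<omega>. (cmod (W u t \<omega>))\<^sup>2 \<partial>M) = (a t)\<^sup>2 *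
     set_lebesgue_integral lborel {0<..} (\<lambda>\<xi>. S \<xi> * q powr (u + log q (\<gamma>' t)) * (cmod (Psi (q powr (u + log q (\<gamma>' t)) * \<xi>)))\<^sup>2)"
proof -
  define G where "G = (\<integral>\<xi>. indicator {0<..} \<xi> * (S \<xi> * (cmod (Psi (q powr u * \<gamma>' t * \<xi>)))\<^sup>2) \<partial>lborel)"
  have qg: "q powr (u + log q (\<gamma>' t)) = q powr u * \<gamma>' t"
    using q gp by (simp add: powr_add)
  have "complex_of_real (\<integral>\<omega>. (cmod (W u t \<omega>))\<^sup>2 \<partial>M) = (\<integral>\<omega>. complex_of_real ((cmod (W u t \<omega>))\<^sup>2) \<partial>M)"
    by (rule integral_complex_of_real[symmetric])
  also have "\<dots> = (\<integral>\<omega>. W u t \<omega> * cnj (W u t \<omega>) \<partial>M)"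
    by (simp only: complex_norm_square)
  also have "\<dots> = cov_W a \<gamma> \<gamma>' S Psi q u t u t" by (rule W_cov)
  also have "\<dots> = complex_of_real ((a t)\<^sup>2 * (q powr u * \<gamma>' t) * G)"
  proof -
    have i: "(\<lambda>\<xi>. indicator {0<..} \<xi> *\<^sub>R (complex_of_real (S \<xi>)
        * cnj (Psi (q powr u * \<gamma>' t * \<xi>)) * Psi (q powr u * \<gamma>' t * \<xi>)
        * exp (2 * \<i> * complex_of_real (pi * \<xi> * (\<gamma> t - \<gamma> t)))))
      = (\<lambda>\<xi>. complex_of_real (indicator {0<..} \<xi> * (S \<xi> * (cmod (Psi (q powr u * \<gamma>' t * \<xi>)))\<^sup>2)))"
      proof (rule ext)
      fix \<xi> :: real
      define P where "P = Psi (q powr u * \<gamma>' t * \<xi>)"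
      have e: "exp (2 * \<i> * complex_of_real (pi * \<xi> * (\<gamma> t - \<gamma> t))) = 1" by simp
      have c: "cnj P * P = complex_of_real ((cmod P)\<^sup>2)" by (simp only: complex_norm_square mult.commute)
      show "indicator {0<..} \<xi> *\<^sub>R (complex_of_real (S \<xi>) * cnj P * P * exp (2 * \<i> * complex_of_real (pi * \<xi> * (\<gamma> t - \<gamma> t))))
          = complex_of_real (indicator {0<..} \<xi> * (S \<xi> * (cmod P)\<^sup>2))"
        unfolding e by (simp only: c mult.assoc scaleR_conv_of_real of_real_mult mult_1_right)
    qed
    have s: "sqrt (\<gamma>' t * \<gamma>' t) = \<gamma>' t" using gp by simp
    have p: "q powr ((u + u) / 2) = q powr u" by simp
    show ?thesis
      unfolding cov_W_def set_lebesgue_integral_def i integral_complex_of_real G_def s p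
      by (simp add: power2_eq_square mult_ac)
  qed
  finally have E: "(\<integral>\<omega>. (cmod (W u t \<omega>))\<^sup>2 \<partial>M) = (a t)\<^sup>2 * (q powr u * \<gamma>' t) * G"
    using of_real_eq_iff by blast
  have X: "(q powr u * \<gamma>' t) * G = set_lebesgue_integral lborel {0<..} (\<lambda>\<xi>. S \<xi> * q powr (u + log q (\<gamma>' t)) * (cmod (Psi (q powr (u + log q (\<gamma>' t)) * \<xi>)))\<^sup>2)"
    unfolding qg G_def set_lebesgue_integral_def
    by (simp flip: integral_mult_right_zero add: mult_ac)
  show ?thesis by (metis E X mult.assoc)
qed


theorem proposition1:
  fixes q :: real and \<eta> :: real and c\<^sub>\<theta> :: real
    and S :: "real \<Rightarrow> real"
    and M' :: "'b measure" and X :: "real \<Rightarrow> 'b \<Rightarrow> real"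
    and a \<gamma> \<gamma>' :: "real \<Rightarrow> real"
    and Psi Psi' :: "real \<Rightarrow> complex"
    and M :: "'a measure" and W :: "real \<Rightarrow> real \<Rightarrow> 'a \<Rightarrow> complex"
    and N Ms :: nat and \<tau> s :: "nat \<Rightarrow> real"
    and th1 th2 :: "nat \<Rightarrow> nat \<Rightarrow> real" and k :: nat
  assumes q: "q > 1"
    \<comment> \<open>X: real zero-mean stationary process with power spectrum S\<close>
    and S_nonneg: "\<And>\<nu>. S \<nu> \<ge> 0"
    and S_meas: "S \<in> borel_measurable borel"
    and S_int: "integrable lborel S"
    and M'_prob: "prob_space M'"
    and X_meas: "\<And>t. X t \<in> borel_measurable M'"
    and X_int: "\<And>t t'. integrable M' (\<lambda>\<omega>. X t \<omega> * X t' \<omega>)"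
    and X_mean: "\<And>t. integrable M' (X t) \<and> (\<integral>\<omega>. X t \<omega> \<partial>M') = 0"
    and X_cov: "\<And>t t'. complex_of_real (\<integral>\<omega>. X t \<omega> * X t' \<omega> \<partial>M') =
        (\<integral>\<nu>. complex_of_real (S \<nu>) * exp (2 * \<i> * complex_of_real (pi * \<nu> * (t - t'))) \<partial>lborel)"
    \<comment> \<open>a positive, gamma strictly increasing and differentiable with derivative gamma'\<close>
    and a_pos: "\<And>t. a t > 0"
    and \<gamma>_mono: "strict_mono \<gamma>"
    and \<gamma>_deriv: "\<And>t. (\<gamma> has_real_derivative \<gamma>' t) (at t)"
    and \<gamma>'_pos: "\<And>n. n \<in> {1..N} \<Longrightarrow> \<gamma>' (\<tau> n) > 0"
    \<comment> \<open>psi in H^2, given through its Fourier transform Psi\<close>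
    and Psi_meas: "Psi \<in> borel_measurable borel"
    and Psi_L2: "integrable lborel (\<lambda>u. (cmod (Psi u))\<^sup>2)"
    and Psi_supp: "\<And>u. u < 0 \<Longrightarrow> Psi u = 0"
    and Psi_bdd: "bounded (range Psi)"
    and \<eta>: "\<eta> > 2"
    and Psi_decay: "(\<lambda>u. cmod (Psi u)) \<in> O[at_top](\<lambda>u. u powr (- \<eta>))"
    and Psi_deriv: "\<And>u. u > 0 \<Longrightarrow> (Psi has_vector_derivative Psi' u) (at u)"
    and Psi'_bdd: "bdd_above ((\<lambda>u. cmod (Psi' u)) ` {0<..})"
    \<comment> \<open>J_X finite\<close>
    and J_fin: "set_integrable lborel {0<..} (\<lambda>\<xi>. S \<xi> / \<xi>)"
    \<comment> \<open>the random field tilde W_Y\<close>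
    and M_prob: "prob_space M"
    and W_meas: "\<And>s' t. W s' t \<in> borel_measurable M"
    and W_mean: "\<And>s' t. integrable M (W s' t) \<and> (\<integral>\<omega>. W s' t \<omega> \<partial>M) = 0"
    and W_cov_int: "\<And>s1 t1 s2 t2. integrable M (\<lambda>\<omega>. W s1 t1 \<omega> * cnj (W s2 t2 \<omega>))"
    and W_cov: "\<And>s1 t1 s2 t2. (\<integral>\<omega>. W s1 t1 \<omega> * cnj (W s2 t2 \<omega>) \<partial>M)
                   = cov_W a \<gamma> \<gamma>' S Psi q s1 t1 s2 t2"
    \<comment> \<open>samples and estimates\<close>
    and N: "N \<ge> 1" and Ms: "Ms \<ge> 1"
    and c\<^sub>\<theta>: "c\<^sub>\<theta> > 0"
    and th1_lb: "\<And>k' n. n \<in> {1..N} \<Longrightarrow> th1 k' n > c\<^sub>\<theta>"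
  shows
    "bdd_above ((\<lambda>u. \<bar>phi1 Psi u\<bar>) ` {0<..}) \<and> bdd_above ((\<lambda>u. \<bar>phi2 Psi u\<bar>) ` {0<..}) \<and>
     (MAX m\<in>{1..Ms}.
        \<bar>(\<integral>\<omega>. (1 / (real N * psi_sq_norm Psi)) *
              (\<Sum>n=1..N. (1 / th1 k n) * (cmod (W (s m - th2 k n) (\<tau> n) \<omega>))\<^sup>2) \<partial>M)
         - S_X_psi S Psi q (s m)\<bar>)
     \<le> (set_lebesgue_integral lborel {0<..} (\<lambda>\<xi>. S \<xi> / \<xi>)) / psi_sq_norm Psi *
        ((sup_pos (phi1 Psi) / c\<^sub>\<theta>) * (MAX n\<in>{1..N}. \<bar>(a (\<tau> n))\<^sup>2 - th1 k n\<bar>)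
         + ln q * (sup_pos (phi1 Psi) + 2 * (SUP u\<in>{0<..}. cmod (Psi' u)) * sup_pos (phi2 Psi))
           * (MAX n\<in>{1..N}. \<bar>th2 k n - log q (\<gamma>' (\<tau> n))\<bar>))"
proof -
  have bdd: "bdd_above ((\<lambda>u. \<bar>phi1 Psi u\<bar>) ` {0<..}) \<and> bdd_above ((\<lambda>u. \<bar>phi2 Psi u\<bar>) ` {0<..})"
    by (rule bdd_phis[OF Psi_bdd \<eta> Psi_decay])
  define A where "A = sup_pos (phi1 Psi)"
  define B where "B = (SUP u\<in>{0<..}. cmod (Psi' u))"
  define C where "C = sup_pos (phi2 Psi)"
  have Ab: "\<bar>phi1 Psi v\<bar> \<le> A" if "v > 0" for v
    unfolding A_def sup_pos_def using bdd that by (intro cSUP_upper) auto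
  have Bb: "cmod (Psi' v) \<le> B" if "v > 0" for v
    unfolding B_def using Psi'_bdd that by (intro cSUP_upper) auto
  have Cb: "\<bar>phi2 Psi v\<bar> \<le> C" if "v > 0" for v
    unfolding C_def sup_pos_def using bdd that by (intro cSUP_upper) auto
  have A0: "A \<ge> 0" using Ab[of 1] by linarith
  have B0: "B \<ge> 0" using Bb[of 1] norm_ge_zero[of "Psi' 1"] by linarith
  have C0: "C \<ge> 0" using Cb[of 1] by linarith
  define F where "F \<equiv> \<lambda>v. set_lebesgue_integral lborel {0<..} (\<lambda>\<xi>. S \<xi> * q powr v * (cmod (Psi (q powr v * \<xi>)))\<^sup>2)"
  define J where "J \<equiv> set_lebesgue_integral lborel {0<..} (\<lambda>\<xi>. S \<xi> / \<xi>)"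
  define K where "K = ln q * (A + 2 * B * C)"
  have FA: "\<bar>F v\<bar> \<le> A * J" for v
    unfolding F_def J_def by (rule F_facts(1)[OF q S_nonneg S_meas Psi_meas J_fin Psi_deriv Ab Bb Cb])
  have FL: "\<bar>F x - F y\<bar> \<le> K * \<bar>x - y\<bar> * J" for x y
    unfolding F_def J_def K_def by (rule F_facts(2)[OF q S_nonneg S_meas Psi_meas J_fin Psi_deriv Ab Bb Cb])
  have J0: "J \<ge> 0"
    unfolding J_def set_lebesgue_integral_def using S_nonneg
    by (intro integral_nonneg_AE AE_I2) (auto simp: indicator_def)
  have K0: "K \<ge> 0" unfolding K_def using q A0 B0 C0 by simp
  define P where "P = psi_sq_norm Psi"
  have P0: "P \<ge> 0" unfolding P_def psi_sq_norm_def by simp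
  define MA where "MA = (MAX n\<in>{1..N}. \<bar>(a (\<tau> n))\<^sup>2 - th1 k n\<bar>)"
  define MD where "MD = (MAX n\<in>{1..N}. \<bar>th2 k n - log q (\<gamma>' (\<tau> n))\<bar>)"
  have MAb: "\<bar>(a (\<tau> n))\<^sup>2 - th1 k n\<bar> \<le> MA" if "n \<in> {1..N}" for n
    unfolding MA_def using that by (intro Max_ge) auto
  have MDb: "\<bar>th2 k n - log q (\<gamma>' (\<tau> n))\<bar> \<le> MD" if "n \<in> {1..N}" for n
    unfolding MD_def using that by (intro Max_ge) auto
  define bnd where "bnd = (A / c\<^sub>\<theta>) * MA * J + K * MD * J"
  have intW: "integrable M (\<lambda>\<omega>. (cmod (W u t \<omega>))\<^sup>2)" for u t
  proof -
    have "integrable M (\<lambda>\<omega>. Re (W u t \<omega> * cnj (W u t \<omega>)))" by (rule integrable_Re[OF W_cov_int])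
    moreover have "(\<lambda>\<omega>. Re (W u t \<omega> * cnj (W u t \<omega>))) = (\<lambda>\<omega>. (cmod (W u t \<omega>))\<^sup>2)"
      by (rule ext) (simp flip: complex_norm_square)
    ultimately show ?thesis by simp
  qed
  have main: "\<bar>(\<integral>\<omega>. (1 / (real N * P)) *
              (\<Sum>n=1..N. (1 / th1 k n) * (cmod (W (s m - th2 k n) (\<tau> n) \<omega>))\<^sup>2) \<partial>M)
         - S_X_psi S Psi q (s m)\<bar> \<le> J / P * ((A / c\<^sub>\<theta>) * MA + K * MD)" for m
  proof (cases "P = 0")
    case True
    then show ?thesis by (simp add: S_X_psi_def P_def)
  next
    case False
    then have Ppos: "P > 0" using P0 by simp
    define v where "v = (\<lambda>n. s m - th2 k n + log q (\<gamma>' (\<tau> n)))"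
    define T where "T = (\<lambda>n. (1 / th1 k n) * ((a (\<tau> n))\<^sup>2 * F (v n)) - F (s m))"
    have EWn: "(\<integral>\<omega>. (cmod (W (s m - th2 k n) (\<tau> n) \<omega>))\<^sup>2 \<partial>M) = (a (\<tau> n))\<^sup>2 * F (v n)"
      if "n \<in> {1..N}" for n
      unfolding F_def v_def using EW[OF q \<gamma>'_pos[OF that] W_cov_int W_cov] by simp
    have "(\<integral>\<omega>. (1 / (real N * P)) *
              (\<Sum>n=1..N. (1 / th1 k n) * (cmod (W (s m - th2 k n) (\<tau> n) \<omega>))\<^sup>2) \<partial>M)
        = (1 / (real N * P)) * (\<Sum>n=1..N. (1 / th1 k n) * ((a (\<tau> n))\<^sup>2 * F (v n)))"
      by (simp add: integral_sum intW EWn)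
    moreover have "S_X_psi S Psi q (s m) = (1 / (real N * P)) * (\<Sum>n=1..N. F (s m))"
      using N by (simp add: S_X_psi_def F_def P_def)
    ultimately have eq: "(\<integral>\<omega>. (1 / (real N * P)) *
              (\<Sum>n=1..N. (1 / th1 k n) * (cmod (W (s m - th2 k n) (\<tau> n) \<omega>))\<^sup>2) \<partial>M)
         - S_X_psi S Psi q (s m) = (1 / (real N * P)) * (\<Sum>n=1..N. T n)"
      by (simp add: T_def sum_subtractf right_diff_distrib)
    have Tb: "\<bar>T n\<bar> \<le> bnd" if n: "n \<in> {1..N}" for n
    proof -
      have th: "th1 k n > c\<^sub>\<theta>" using th1_lb[OF n] .
      have tpos: "th1 k n > 0" using th c\<^sub>\<theta> by simp
      have "T n = ((a (\<tau> n))\<^sup>2 - th1 k n) / th1 k n * F (v n) + (F (v n) - F (s m))"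
        using tpos by (simp add: T_def field_simps)
      then have "\<bar>T n\<bar> \<le> \<bar>((a (\<tau> n))\<^sup>2 - th1 k n) / th1 k n * F (v n)\<bar> + \<bar>F (v n) - F (s m)\<bar>"
        by (simp only: abs_triangle_ineq)
      also have "\<bar>((a (\<tau> n))\<^sup>2 - th1 k n) / th1 k n * F (v n)\<bar> + \<bar>F (v n) - F (s m)\<bar> = \<bar>(a (\<tau> n))\<^sup>2 - th1 k n\<bar> / th1 k n * \<bar>F (v n)\<bar> + \<bar>F (v n) - F (s m)\<bar>"
        using tpos by (simp add: abs_mult abs_divide)
      also have "\<dots> \<le> MA / c\<^sub>\<theta> * (A * J) + K * MD * J"
      proof (rule add_mono)
        have "\<bar>(a (\<tau> n))\<^sup>2 - th1 k n\<bar> / th1 k n \<le> MA / c\<^sub>\<theta>"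
          using MAb[OF n] th c\<^sub>\<theta> by (meson abs_ge_zero divide_mono order_less_imp_le)
        then show "\<bar>(a (\<tau> n))\<^sup>2 - th1 k n\<bar> / th1 k n * \<bar>F (v n)\<bar> \<le> MA / c\<^sub>\<theta> * (A * J)"
          using FA[of "v n"] using order_trans[OF abs_ge_zero MAb[OF n]] c\<^sub>\<theta> by (intro mult_mono) (auto simp: tpos)
        have "\<bar>v n - s m\<bar> = \<bar>th2 k n - log q (\<gamma>' (\<tau> n))\<bar>" by (simp add: v_def)
        then have "\<bar>v n - s m\<bar> \<le> MD" using MDb[OF n] by simp
        then show "\<bar>F (v n) - F (s m)\<bar> \<le> K * MD * J"
          using FL[of "v n" "s m"] K0 J0 by (smt (verit) mult_left_mono mult_right_mono)
      qed
      finally show ?thesis by (simp add: bnd_def mult_ac)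
    qed
    have "\<bar>\<Sum>n=1..N. T n\<bar> \<le> (\<Sum>n=1..N. bnd)"
      by (rule order_trans[OF sum_abs sum_mono]) (rule Tb)
    also have "\<dots> = real N * bnd" by simp
    finally have sb: "\<bar>\<Sum>n=1..N. T n\<bar> \<le> real N * bnd" .
    have "\<bar>(1 / (real N * P)) * (\<Sum>n=1..N. T n)\<bar> = (1 / (real N * P)) * \<bar>\<Sum>n=1..N. T n\<bar>"
      using Ppos N by (simp add: abs_mult)
    also have "\<dots> \<le> (1 / (real N * P)) * (real N * bnd)"
      using Ppos N sb by (intro mult_left_mono) auto
    also have "\<dots> = J / P * ((A / c\<^sub>\<theta>) * MA + K * MD)"
      using Ppos N by (simp add: bnd_def field_simps)
    finally show ?thesis unfolding eq .
  qed
  have "(MAX m\<in>{1..Ms}.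
        \<bar>(\<integral>\<omega>. (1 / (real N * psi_sq_norm Psi)) *
              (\<Sum>n=1..N. (1 / th1 k n) * (cmod (W (s m - th2 k n) (\<tau> n) \<omega>))\<^sup>2) \<partial>M)
         - S_X_psi S Psi q (s m)\<bar>) \<le> J / P * ((A / c\<^sub>\<theta>) * MA + K * MD)"
    using Ms main unfolding P_def by (intro Max.boundedI) auto
  then show ?thesis using bdd
    unfolding A_def B_def C_def J_def P_def MA_def MD_def K_def by (simp add: mult.assoc)
qed

end
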